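(* Let $G=(V,E)$ be a computation graph with $n=|V|$ vertices, evaluated in parallel on $p$ processors, each with a private fast memory of size $M$. Let $\lambda_1(\tilde L)\le\dots\le\lambda_n(\tilde L)$ be the eigenvalues of $\tilde L$ in increasing order. Then for every positive integer $k$, in any such parallel evaluation at least one processor incurs a number of I/Os $J^*_G$ satisfying $$J^*_G \;\geq\; \left\lfloor\frac{n}{kp}\right\rfloor \sum_{i=1}^k \lambda_i(\tilde L) \;-\; 2kM.$$
   Context: A computation graph is a finite directed acyclic graph $G=(V,E)$. Each vertex is an operation producing a single element, and an edge $(u,v)$ means the result of $u$ is an operand of $v$. Parallel execution model: there are $p$ processors, each with its own fast memory holding at most $M$ elements, together with unbounded slow memory. Every vertex is evaluated exactly once (no recomputation) by exactly one processor, respecting the dependencies of $G$. No assumption is made on how the work is distributed among processors. To evaluate a vertex, all its operands must be in the evaluating processor's fast memory. A value that is evicted while still needed must first be written out. The I/O of a processor counts each element it communicates with slow memory or with another processor. As in the sequential non-trivial I/O convention, inputs can be placed directly into fast memory and outputs reported at no cost. $\tilde L=\tilde D-\tilde A$ is the Laplacian of the weighted undirected graph $\tilde G$ on $V$. For each directed edge $(u,v)\in E$, $\tilde G$ contains the undirected edge $\{u,v\}$ with weight $1/d_{out}(u)$, where $d_{out}$ is out-degree in $G$. *)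

theory Defs
  imports "Jordan_Normal_Form.Char_Poly"
begin

definition comp_graph :: "nat \<Rightarrow> (nat \<times> nat) set \<Rightarrow> bool" where
  "comp_graph n E \<longleftrightarrow> E \<subseteq> {0..<n} \<times> {0..<n} \<and> acyclic E"

definition out_deg :: "(nat \<times> nat) set \<Rightarrow> nat \<Rightarrow> nat" where
  "out_deg E u = card {v. (u, v) \<in> E}"

text \<open>Adjacency weight of the undirected graph: edge {u,v} with weight 1/d_out(u)
  for each directed edge (u,v) in E.\<close>
definition lap_weight :: "(nat \<times> nat) set \<Rightarrow> nat \<Rightarrow> nat \<Rightarrow> real" where
  "lap_weight E u v =
     (if (u, v) \<in> E then 1 / real (out_deg E u) else 0) +
     (if (v, u) \<in> E then 1 / real (out_deg E v) else 0)"

definition laplacian :: "nat \<Rightarrow> (nat \<times> nat) set \<Rightarrow> real mat" where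
  "laplacian n E = mat n n (\<lambda>(i, j).
     (if i = j then (\<Sum>w<n. lap_weight E i w) else 0) - lap_weight E i j)"

text \<open>ls lists the eigenvalues (with algebraic multiplicity) in increasing order.\<close>
definition sorted_eigenvalues :: "real mat \<Rightarrow> real list \<Rightarrow> bool" where
  "sorted_eigenvalues A ls \<longleftrightarrow>
     sorted ls \<and> char_poly A = (\<Prod>a\<leftarrow>ls. [:- a, 1:])"

datatype move =
    Compute nat nat      \<comment> \<open>processor j evaluates vertex v\<close>
  | Evict nat nat        \<comment> \<open>processor j discards v from fast memory\<close>
  | Store nat nat        \<comment> \<open>processor j writes v to slow memory\<close>
  | Load nat nat         \<comment> \<open>processor j reads v from slow memory\<close>
  | Send nat nat nat     \<comment> \<open>processor j sends v to processor j'\<close>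

text \<open>State: fast memory contents of each processor, slow memory contents,
  set of already evaluated vertices.\<close>
type_synonym pstate = "(nat \<Rightarrow> nat set) \<times> nat set \<times> nat set"

fun step :: "nat \<Rightarrow> (nat \<times> nat) set \<Rightarrow> nat \<Rightarrow> nat \<Rightarrow> move \<Rightarrow> pstate \<Rightarrow> pstate option" where
  "step n E p M (Compute j v) (R, S, C) =
     (if j < p \<and> v < n \<and> v \<notin> C \<and> (\<forall>u. (u, v) \<in> E \<longrightarrow> u \<in> R j)
         \<and> card (insert v (R j)) \<le> M
      then Some (R(j := insert v (R j)), S, insert v C) else None)"
| "step n E p M (Evict j v) (R, S, C) =
     (if j < p \<and> v \<in> R j then Some (R(j := R j - {v}), S, C) else None)"
| "step n E p M (Store j v) (R, S, C) =
     (if j < p \<and> v \<in> R j then Some (R, insert v S, C) else None)"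
| "step n E p M (Load j v) (R, S, C) =
     (if j < p \<and> v \<in> S \<and> card (insert v (R j)) \<le> M
      then Some (R(j := insert v (R j)), S, C) else None)"
| "step n E p M (Send j j' v) (R, S, C) =
     (if j < p \<and> j' < p \<and> j \<noteq> j' \<and> v \<in> R j \<and> card (insert v (R j')) \<le> M
      then Some (R(j' := insert v (R j')), S, C) else None)"

fun exec :: "nat \<Rightarrow> (nat \<times> nat) set \<Rightarrow> nat \<Rightarrow> nat \<Rightarrow> move list \<Rightarrow> pstate \<Rightarrow> pstate option" where
  "exec n E p M [] st = Some st"
| "exec n E p M (m # ms) st =
     (case step n E p M m st of None \<Rightarrow> None | Some st' \<Rightarrow> exec n E p M ms st')"

text \<open>A valid parallel evaluation: starting with empty memories, every move is legal
  and at the end every vertex has been evaluated (exactly once, enforced by step).\<close>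
definition valid_par_schedule :: "nat \<Rightarrow> (nat \<times> nat) set \<Rightarrow> nat \<Rightarrow> nat \<Rightarrow> move list \<Rightarrow> bool" where
  "valid_par_schedule n E p M ms \<longleftrightarrow>
     (\<exists>R S. exec n E p M ms (\<lambda>_. {}, {}, {}) = Some (R, S, {0..<n}))"

fun move_io :: "nat \<Rightarrow> move \<Rightarrow> nat" where
  "move_io j (Compute _ _) = 0"
| "move_io j (Evict _ _) = 0"
| "move_io j (Store i _) = (if i = j then 1 else 0)"
| "move_io j (Load i _) = (if i = j then 1 else 0)"
| "move_io j (Send i i' _) = (if i = j then 1 else 0) + (if i' = j then 1 else 0)"

definition proc_io :: "nat \<Rightarrow> move list \<Rightarrow> nat" where
  "proc_io j ms = (\<Sum>m\<leftarrow>ms. move_io j m)"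

end

theory Submission
  imports Defs "Jordan_Normal_Form.Schur_Decomposition"
begin

lemma spectral_real_sym:
  fixes A :: "real mat"
  assumes "A \<in> carrier_mat n n" "transpose_mat A = A" "char_poly A = (\<Prod>e\<leftarrow>es. [:- e, 1:])"
  shows "\<exists>U. U \<in> carrier_mat n n \<and> transpose_mat U * U = 1\<^sub>m n \<and>
     transpose_mat U * A * U = mat n n (\<lambda>(i,j). if i = j then es ! i else 0)"
  using assms
proof (induct es arbitrary: n A)
  case Nil
  hence n: "n = 0" using degree_monic_char_poly[OF Nil(1)] by auto
  show ?case by (intro exI[of _ "1\<^sub>m n"]) (auto intro!: eq_matI simp: n)
next
  case (Cons e es n A)
  note A = Cons(2) and sym = Cons(3) and cp = Cons(4)
  have mon: "monic (\<Prod>e\<leftarrow> es. [:- e, 1:])" by (rule monic_prod_list, auto)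
  hence "(\<Prod>e\<leftarrow> es. [:- e, 1:]) \<noteq> 0" by auto
  hence "degree ([:- e, 1:] * (\<Prod>e\<leftarrow> es. [:- e, 1:])) = degree [:- e, 1:] + degree (\<Prod>e\<leftarrow> es. [:- e, 1:])"
    by (intro degree_mult_eq) auto
  hence deg: "degree (char_poly A) = Suc (degree (\<Prod>e\<leftarrow> es. [:- e, 1:]))" unfolding cp by simp
  with degree_monic_char_poly[OF A] obtain n1 where n: "n = Suc n1" by (cases n) auto
  have ev: "eigenvalue A e" unfolding eigenvalue_root_char_poly[OF A] cp by simp
  define v where "v = find_eigenvector A e"
  from find_eigenvector[OF A ev] have "eigenvector A v e" unfolding v_def .
  hence v: "v \<in> carrier_vec n" "v \<noteq> 0\<^sub>v n" "A *\<^sub>v v = e \<cdot>\<^sub>v v" using A unfolding eigenvector_def by auto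
  have vv: "v \<bullet> v > 0" using conjugate_square_greater_0_vec[OF v(1)] v(2) by simp
  define v1 where "v1 = (1 / sqrt (v \<bullet> v)) \<cdot>\<^sub>v v"
  have v1c: "v1 \<in> carrier_vec n" unfolding v1_def using v by auto
  have v11: "v1 \<bullet> v1 = 1" unfolding v1_def using v(1) vv
    by (simp add: smult_scalar_prod_distrib[OF _ v(1)] scalar_prod_smult_distrib[OF v(1)])
  have v1e: "A *\<^sub>v v1 = e \<cdot>\<^sub>v v1" unfolding v1_def using v A
    by (simp add: mult_mat_vec smult_smult_assoc mult.commute)
  have v10: "v1 \<noteq> 0\<^sub>v n" using v11 v1c by auto
  interpret cof_vec_space n "TYPE(real)" .
  define b where "b = basis_completion v1"
  from basis_completion[OF v1c v10, folded b_def]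
  have dist_b: "distinct b" and indep: "\<not> lin_dep (set b)" and bc: "set b \<subseteq> carrier_vec n"
    and hdb: "hd b = v1" and len_b: "length b = n" by auto
  from hdb len_b n obtain vs where bv: "b = v1 # vs" by (cases b, auto)
  define ws where "ws = gram_schmidt n b"
  from gram_schmidt_result[OF bc dist_b indep refl, folded ws_def]
  have wsc: "set ws \<subseteq> carrier_vec n" and wso: "corthogonal ws" and wsl: "length ws = n"
    by (auto simp: len_b)
  from gram_schmidt_hd[OF v1c, of vs, folded bv] have hdws: "hd ws = v1" unfolding ws_def .
  have ws0: "ws ! 0 = v1" using hdws wsl n by (cases ws) auto
  define wsn where "wsn = map (\<lambda>w. (1 / sqrt (w \<bullet> w)) \<cdot>\<^sub>v w) ws"
  have wsnl: "length wsn = n" unfolding wsn_def using wsl by simp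
  have wsnc: "\<And>i. i < n \<Longrightarrow> wsn ! i \<in> carrier_vec n" unfolding wsn_def using wsc wsl
    by (auto simp: set_conv_nth)
  have orth: "\<And>i j. i < n \<Longrightarrow> j < n \<Longrightarrow> wsn ! i \<bullet> wsn ! j = (if i = j then 1 else 0)"
  proof -
    fix i j assume i: "i < n" and j: "j < n"
    have ci: "ws ! i \<in> carrier_vec n" and cj: "ws ! j \<in> carrier_vec n" using wsc wsl i j
      by (auto simp: set_conv_nth)
    have oij: "ws ! i \<bullet> ws ! j = 0 \<longleftrightarrow> i \<noteq> j" using corthogonalD[OF wso, of i j] i j wsl by simp
    have pos: "ws ! i \<bullet> ws ! i > 0" using oij[of] corthogonalD[OF wso, of i i] i wsl
      conjugate_square_greater_0_vec[OF ci] by auto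
    have posj: "ws ! j \<bullet> ws ! j > 0" using corthogonalD[OF wso, of j j] j wsl
      conjugate_square_greater_0_vec[OF cj] by auto
    show "wsn ! i \<bullet> wsn ! j = (if i = j then 1 else 0)"
      using i j wsl pos posj oij ci cj
      by (auto simp: wsn_def smult_scalar_prod_distrib[OF _ cj] scalar_prod_smult_distrib[OF ci]
           smult_scalar_prod_distrib[OF _ ci] scalar_prod_smult_distrib[OF ci])
  qed
  have wsn0: "wsn ! 0 = v1" unfolding wsn_def using ws0 v11 wsl n by simp
  define W where "W = mat_of_cols n wsn"
  have W: "W \<in> carrier_mat n n" unfolding W_def using wsnl by auto
  have colW: "\<And>i. i < n \<Longrightarrow> col W i = wsn ! i" unfolding W_def using wsnl wsnc by simp
  have WtW: "transpose_mat W * W = 1\<^sub>m n"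
    by (rule eq_matI, insert W, auto simp: colW orth)
  have WWt: "W * transpose_mat W = 1\<^sub>m n"
    using mat_mult_left_right_inverse[OF _ W WtW] W by auto
  define A' where "A' = transpose_mat W * A * W"
  have A'c: "A' \<in> carrier_mat n n" unfolding A'_def using W A by auto
  have A'sym: "transpose_mat A' = A'"
  proof -
    have "transpose_mat A' = transpose_mat W * transpose_mat (transpose_mat W * A)"
      unfolding A'_def by (rule transpose_mult[of _ n n _ n], insert W A, auto)
    also have "transpose_mat (transpose_mat W * A) = transpose_mat A * W"
      by (subst transpose_mult[of _ n n _ n], insert W A, auto)
    finally show ?thesis unfolding A'_def sym using W A by (simp add: assoc_mult_mat[of _ n n _ n _ n])
  qed
  have col0: "\<And>i. i < n \<Longrightarrow> A' $$ (i,0) = (if i = 0 then e else 0)"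
  proof -
    fix i assume i: "i < n"
    have "A' = transpose_mat W * (A * W)" unfolding A'_def using W A by auto
    hence "A' $$ (i,0) = col W i \<bullet> col (A * W) 0" using i W A n by simp
    also have "col (A * W) 0 = A *\<^sub>v col W 0" by (rule col_mult2[OF A W], simp add: n)
    also have "col W 0 = v1" using colW[of 0] wsn0 n by simp
    also have "col W i \<bullet> (A *\<^sub>v v1) = e * (wsn ! i \<bullet> wsn ! 0)"
      unfolding v1e colW[OF i] wsn0 using wsnc[OF i] v1c by simp
    finally show "A' $$ (i,0) = (if i = 0 then e else 0)" using orth[OF i, of 0] n by simp
  qed
  have row0: "\<And>j. j < n \<Longrightarrow> A' $$ (0,j) = (if j = 0 then e else 0)"
  proof -
    fix j assume j: "j < n"
    have "A' $$ (0,j) = transpose_mat A' $$ (j,0)" using A'c j n by simp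
    thus "A' $$ (0,j) = (if j = 0 then e else 0)" using col0[OF j] A'sym by simp
  qed
  define A3 where "A3 = mat n1 n1 (\<lambda>(i,j). A' $$ (Suc i, Suc j))"
  define A1 where "A1 = mat 1 1 (\<lambda>_. e)"
  have A3c: "A3 \<in> carrier_mat n1 n1" unfolding A3_def by simp
  have A1c: "A1 \<in> carrier_mat 1 1" unfolding A1_def by simp
  have A'block: "A' = four_block_mat A1 (0\<^sub>m 1 n1) (0\<^sub>m n1 1) A3"
  proof (rule eq_matI)
    fix i j assume i: "i < dim_row (four_block_mat A1 (0\<^sub>m 1 n1) (0\<^sub>m n1 1) A3)"
      and j: "j < dim_col (four_block_mat A1 (0\<^sub>m 1 n1) (0\<^sub>m n1 1) A3)"
    hence i': "i < n" and j': "j < n" using n A1c A3c by auto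
    show "A' $$ (i, j) = four_block_mat A1 (0\<^sub>m 1 n1) (0\<^sub>m n1 1) A3 $$ (i, j)"
      using i j i' j' col0[OF i'] row0[OF j'] n A1c A3c
      by (cases "i = 0"; cases "j = 0") (auto simp: A1_def A3_def)
  qed (insert A'c A1c A3c n, auto)
  have A3sym: "transpose_mat A3 = A3"
  proof (rule eq_matI)
    fix i j assume "i < dim_row A3" "j < dim_col A3"
    hence i: "i < n1" and j: "j < n1" using A3c by auto
    have "A' $$ (Suc j, Suc i) = transpose_mat A' $$ (Suc i, Suc j)" using A'c i j n by simp
    thus "transpose_mat A3 $$ (i, j) = A3 $$ (i, j)" using i j A'sym by (simp add: A3_def)
  qed (insert A3c, auto)
  have sim: "similar_mat A' A" unfolding similar_mat_def similar_mat_wit_def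
    by (rule exI[of _ "transpose_mat W"], rule exI[of _ W], insert A'c A W WtW WWt, auto simp: A'_def)
  have "[: -e,1 :] * (\<Prod> e \<leftarrow> es. [:- e, 1:]) = char_poly A'" using cp char_poly_similar[OF sim] by simp
  also have "char_poly A' = char_poly A1 * char_poly A3" 
    unfolding A'block by (rule char_poly_four_block_zeros_col[OF A1c _ A3c], auto)
  also have "char_poly A1 = [: -e,1 :]"
    by (simp add: A1_def char_poly_defs det_def sign_def)
  finally have cp3: "char_poly A3 = (\<Prod> e \<leftarrow> es. [:- e, 1:])"
    by (metis mult_cancel_left pCons_eq_0_iff zero_neq_one)
  from Cons(1)[OF A3c A3sym cp3] obtain U' where U'c: "U' \<in> carrier_mat n1 n1"
    and U'o: "transpose_mat U' * U' = 1\<^sub>m n1"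
    and U'd: "transpose_mat U' * A3 * U' = mat n1 n1 (\<lambda>(i,j). if i = j then es ! i else 0)" by blast
  define X where "X = four_block_mat (1\<^sub>m 1) (0\<^sub>m 1 n1) (0\<^sub>m n1 1) U'"
  define Xt where "Xt = four_block_mat (1\<^sub>m 1) (0\<^sub>m 1 n1) (0\<^sub>m n1 1) (transpose_mat U')"
  have Xc: "X \<in> carrier_mat n n" unfolding X_def n using U'c by auto
  have Xtc: "Xt \<in> carrier_mat n n" unfolding Xt_def n using U'c by auto
  have XtX: "transpose_mat X = Xt" unfolding X_def Xt_def
    by (subst transpose_four_block_mat, insert U'c, auto)
  define U where "U = W * X"
  have Uc: "U \<in> carrier_mat n n" unfolding U_def using W Xc by auto
  have Ut: "transpose_mat U = Xt * transpose_mat W" unfolding U_def XtX[symmetric]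
    by (rule transpose_mult, insert W Xc, auto)
  have "transpose_mat U * U = Xt * (transpose_mat W * W) * X"
    unfolding Ut unfolding U_def using W Xc Xtc by (simp add: assoc_mult_mat[of _ n n _ n _ n])
  also have "\<dots> = Xt * X" unfolding WtW using Xtc by simp
  also have "\<dots> = 1\<^sub>m n" unfolding Xt_def X_def n
    by (subst mult_four_block_mat, insert U'c U'o, auto)
  finally have o: "transpose_mat U * U = 1\<^sub>m n" .
  have "transpose_mat U * A * U = Xt * A' * X"
    unfolding Ut unfolding U_def A'_def using W Xc Xtc A by (simp add: assoc_mult_mat[of _ n n _ n _ n])
  also have "\<dots> = four_block_mat A1 (0\<^sub>m 1 n1) (0\<^sub>m n1 1) (transpose_mat U' * A3 * U')"
    unfolding Xt_def X_def A'block 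
    by (subst mult_four_block_mat, insert U'c A1c A3c, auto, subst mult_four_block_mat, insert U'c A1c A3c, auto)
  also have "\<dots> = mat n n (\<lambda>(i,j). if i = j then (e # es) ! i else 0)"
    unfolding U'd by (rule eq_matI, auto simp: A1_def n)
  finally show ?case using o Uc by blast
qed

lemma spectral_entries:
  fixes A :: "real mat"
  assumes A: "A \<in> carrier_mat n n" and sym: "transpose_mat A = A" and cp: "char_poly A = (\<Prod>e\<leftarrow>es. [:- e, 1:])"
  shows "\<exists>u. (\<forall>a<n. \<forall>b<n. A $$ (a,b) = (\<Sum>c<n. u a c * es ! c * u b c)) \<and>
             (\<forall>c<n. (\<Sum>a<n. (u a c)\<^sup>2) = 1) \<and>
             (\<forall>a<n. \<forall>b<n. (\<Sum>c<n. u a c * u b c) = (if a = b then 1 else 0))"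
proof -
  obtain U where U: "U \<in> carrier_mat n n" and o: "transpose_mat U * U = 1\<^sub>m n"
    and d: "transpose_mat U * A * U = mat n n (\<lambda>(i,j). if i = j then es ! i else 0)"
    using spectral_real_sym[OF A sym cp] by blast
  define D where "D = mat n n (\<lambda>(i,j). if i = j then es ! i else 0)"
  have Dc: "D \<in> carrier_mat n n" unfolding D_def by simp
  have Ut: "transpose_mat U \<in> carrier_mat n n" using U by simp
  have o2: "U * transpose_mat U = 1\<^sub>m n" using mat_mult_left_right_inverse[OF Ut U o] .
  have "U * D * transpose_mat U = U * (transpose_mat U * A * U) * transpose_mat U" unfolding D_def d ..
  also have "\<dots> = (U * transpose_mat U) * A * (U * transpose_mat U)"
    using U Ut A by (simp add: assoc_mult_mat[of _ n n _ n _ n])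
  also have "\<dots> = A" unfolding o2 using A by simp
  finally have AU: "A = U * D * transpose_mat U" by simp
  have UD: "(U * D) $$ (a,c) = U $$ (a,c) * es ! c" if a: "a < n" and c: "c < n" for a c
  proof -
    have "(U * D) $$ (a,c) = (\<Sum>d\<in>{0..<n}. U $$ (a,d) * D $$ (d,c))"
      using a c U Dc by (simp add: scalar_prod_def)
    also have "\<dots> = (\<Sum>d\<in>{0..<n}. if d = c then U $$ (a,c) * es ! c else 0)"
      by (rule sum.cong, insert c, auto simp: D_def)
    also have "\<dots> = U $$ (a,c) * es ! c" using c by simp
    finally show ?thesis .
  qed
  show ?thesis
  proof (intro exI[of _ "\<lambda>a c. U $$ (a,c)"] conjI allI impI)
    fix a b assume a: "a < n" and b: "b < n"
    define UD where "UD = U * D"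
    have UDc: "UD \<in> carrier_mat n n" unfolding UD_def using U Dc by simp
    have "A $$ (a,b) = (UD * transpose_mat U) $$ (a,b)" using AU unfolding UD_def by simp
    also have "\<dots> = (\<Sum>c\<in>{0..<n}. UD $$ (a,c) * U $$ (b,c))"
      using a b U UDc by (simp add: scalar_prod_def)
    also have "\<dots> = (\<Sum>c\<in>{0..<n}. (U * D) $$ (a,c) * U $$ (b,c))" unfolding UD_def ..
    also have "\<dots> = (\<Sum>c<n. U $$ (a,c) * es ! c * U $$ (b,c))"
      using UD a by (simp add: atLeast0LessThan)
    finally show "A $$ (a,b) = (\<Sum>c<n. U $$ (a,c) * es ! c * U $$ (b,c))" .
  next
    fix a b assume a: "a < n" and b: "b < n"
    have "(U * transpose_mat U) $$ (a,b) = (\<Sum>c\<in>{0..<n}. U $$ (a,c) * U $$ (b,c))"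
      using a b U by (simp add: scalar_prod_def)
    thus "(\<Sum>c<n. U $$ (a,c) * U $$ (b,c)) = (if a = b then 1 else 0)"
      unfolding o2 using a b by (simp add: atLeast0LessThan)
  next
    fix c assume c: "c < n"
    have "(transpose_mat U * U) $$ (c,c) = (\<Sum>a\<in>{0..<n}. U $$ (a,c) * U $$ (a,c))"
      using c U by (simp add: scalar_prod_def)
    thus "(\<Sum>a<n. (U $$ (a,c))\<^sup>2) = 1"
      unfolding o using c by (simp add: atLeast0LessThan power2_eq_square)
  qed
qed

lemma degree_lin_prod: "degree (\<Prod>e\<leftarrow>(es::real list). [:- e, 1:]) = length es"
proof (induct es)
  case Nil then show ?case by simp
next
  case (Cons e es)
  have mon: "monic (\<Prod>e\<leftarrow> es. [:- e, 1:])" by (rule monic_prod_list, auto)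
  hence "(\<Prod>e\<leftarrow> es. [:- e, 1:]) \<noteq> 0" by auto
  hence "degree ([:- e, 1:] * (\<Prod>e\<leftarrow> es. [:- e, 1:])) = degree [:- e, 1:] + degree (\<Prod>e\<leftarrow> es. [:- e, 1:])"
    by (intro degree_mult_eq) auto
  thus ?case using Cons by simp
qed

lemma sum_sq_le_card:
  fixes f :: "nat \<Rightarrow> real"
  assumes "finite V"
  shows "(\<Sum>a\<in>V. f a)\<^sup>2 \<le> real (card V) * (\<Sum>a\<in>V. (f a)\<^sup>2)"
proof -
  have "0 \<le> (\<Sum>a\<in>V. \<Sum>b\<in>V. (f a - f b)\<^sup>2)" by (intro sum_nonneg) auto
  also have "\<dots> = (\<Sum>a\<in>V. \<Sum>b\<in>V. (f a)\<^sup>2 + (f b)\<^sup>2 - 2 * f a * f b)"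
    by (simp add: power2_diff)
  also have "\<dots> = 2 * real (card V) * (\<Sum>a\<in>V. (f a)\<^sup>2) - 2 * (\<Sum>a\<in>V. f a)\<^sup>2"
    by (simp add: sum_subtractf sum.distrib sum_distrib_left sum_distrib_right power2_eq_square
        algebra_simps)
  finally show ?thesis by simp
qed

lemma sorted_weight:
  fixes ls :: "real list" and w :: "nat \<Rightarrow> real"
  assumes "sorted ls" "length ls = n" "k \<le> n" "0 < k"
    and "\<And>c. c < n \<Longrightarrow> 0 \<le> w c" "\<And>c. c < n \<Longrightarrow> w c \<le> m"
    and "(\<Sum>c<n. w c) = real k * m"
  shows "m * (\<Sum>c<k. ls ! c) \<le> (\<Sum>c<n. ls ! c * w c)"
proof -
  define t where "t = ls ! (k - 1)"
  have split: "\<And>g. (\<Sum>c<n. g c) = (\<Sum>c<k. g c) + (\<Sum>c\<in>{k..<n}. g c)"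
    using assms(3) by (metis atLeast0LessThan sum.atLeastLessThan_concat zero_le)
  have 1: "(\<Sum>c<k. t * (w c - m)) \<le> (\<Sum>c<k. ls ! c * (w c - m))"
  proof (intro sum_mono)
    fix c assume "c \<in> {..<k}"
    hence c: "c < k" by auto
    have "ls ! c \<le> t" unfolding t_def using assms(1,2,3) c by (intro sorted_nth_mono) auto
    moreover have "w c - m \<le> 0" using assms(6)[of c] c assms(3) by auto
    ultimately show "t * (w c - m) \<le> ls ! c * (w c - m)" by (simp add: mult_right_mono_neg)
  qed
  have 2: "(\<Sum>c\<in>{k..<n}. t * w c) \<le> (\<Sum>c\<in>{k..<n}. ls ! c * w c)"
  proof (intro sum_mono)
    fix c assume "c \<in> {k..<n}"
    hence c: "k \<le> c" "c < n" by auto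
    have "t \<le> ls ! c" unfolding t_def using assms(1,2,4) c by (intro sorted_nth_mono) auto
    thus "t * w c \<le> ls ! c * w c" using assms(5)[of c] c by (simp add: mult_right_mono)
  qed
  have "(\<Sum>c<k. t * (w c - m)) + (\<Sum>c\<in>{k..<n}. t * w c) = t * ((\<Sum>c<n. w c) - k * m)"
    by (simp add: split[of w] sum_distrib_left[symmetric] sum_subtractf algebra_simps)
  also have "\<dots> = 0" using assms(7) by simp
  finally have "0 \<le> (\<Sum>c<k. ls ! c * (w c - m)) + (\<Sum>c\<in>{k..<n}. ls ! c * w c)" using 1 2 by linarith
  also have "\<dots> = (\<Sum>c<n. ls ! c * w c) - m * (\<Sum>c<k. ls ! c)"
    using split[of "\<lambda>c. ls ! c * w c"] by (simp add: sum_subtractf sum_distrib_left algebra_simps)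
  finally show ?thesis by simp
qed

lemma kyfan_sets:
  fixes u :: "nat \<Rightarrow> nat \<Rightarrow> real" and Lf :: "nat \<Rightarrow> nat \<Rightarrow> real" and V :: "nat \<Rightarrow> nat set"
  assumes hL: "\<And>a b. a < n \<Longrightarrow> b < n \<Longrightarrow> Lf a b = (\<Sum>c<n. u a c * ls ! c * u b c)"
    and hO1: "\<And>c. c < n \<Longrightarrow> (\<Sum>a<n. (u a c)\<^sup>2) = 1"
    and hO2: "\<And>a b. a < n \<Longrightarrow> b < n \<Longrightarrow> (\<Sum>c<n. u a c * u b c) = (if a = b then 1 else 0)"
    and srt: "sorted ls" and len: "length ls = n" and k: "0 < k" "k \<le> n"
    and hV: "\<And>i. i < k \<Longrightarrow> V i \<subseteq> {..<n}"
    and hc: "\<And>i. i < k \<Longrightarrow> card (V i) = m"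
    and hd: "\<And>i j. i < k \<Longrightarrow> j < k \<Longrightarrow> i \<noteq> j \<Longrightarrow> V i \<inter> V j = {}"
  shows "real m * (\<Sum>c<k. ls ! c) \<le> (\<Sum>i<k. \<Sum>a\<in>V i. \<Sum>b\<in>V i. Lf a b)"
proof -
  have fin: "\<And>i. i < k \<Longrightarrow> finite (V i)" using hV finite_subset by blast
  define w where "w c = (\<Sum>i<k. (\<Sum>a\<in>V i. u a c)\<^sup>2)" for c
  have eq1: "(\<Sum>a\<in>V i. \<Sum>b\<in>V i. Lf a b) = (\<Sum>c<n. ls ! c * (\<Sum>a\<in>V i. u a c)\<^sup>2)" if i: "i < k" for i
  proof -
    have "(\<Sum>a\<in>V i. \<Sum>b\<in>V i. Lf a b) = (\<Sum>a\<in>V i. \<Sum>b\<in>V i. \<Sum>c<n. u a c * ls ! c * u b c)"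
      using hV[OF i] by (intro sum.cong refl hL) auto
    also have "\<dots> = (\<Sum>c<n. \<Sum>a\<in>V i. \<Sum>b\<in>V i. u a c * ls ! c * u b c)"
      by (subst sum.swap, subst (2) sum.swap, simp)
    also have "\<dots> = (\<Sum>c<n. ls ! c * (\<Sum>a\<in>V i. u a c)\<^sup>2)"
      by (simp add: power2_eq_square sum_distrib_left sum_distrib_right algebra_simps)
    finally show ?thesis .
  qed
  have eq: "(\<Sum>i<k. \<Sum>a\<in>V i. \<Sum>b\<in>V i. Lf a b) = (\<Sum>c<n. ls ! c * w c)"
    by (simp add: eq1 w_def sum_distrib_left, subst sum.swap, simp)
  have w0: "0 \<le> w c" for c unfolding w_def by (intro sum_nonneg) auto
  have wm: "w c \<le> real m" if c: "c < n" for c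
  proof -
    have "w c \<le> (\<Sum>i<k. real m * (\<Sum>a\<in>V i. (u a c)\<^sup>2))"
      unfolding w_def
    proof (intro sum_mono)
      fix i assume "i \<in> {..<k}"
      hence i: "i < k" by simp
      show "(\<Sum>a\<in>V i. u a c)\<^sup>2 \<le> real m * (\<Sum>a\<in>V i. (u a c)\<^sup>2)"
        using sum_sq_le_card[OF fin[OF i], of "\<lambda>a. u a c"] hc[OF i] by simp
    qed
    also have "\<dots> = real m * (\<Sum>a\<in>(\<Union>i<k. V i). (u a c)\<^sup>2)"
      by (subst sum.UNION_disjoint, insert fin hd, auto simp: sum_distrib_left)
    also have "\<dots> \<le> real m * (\<Sum>a<n. (u a c)\<^sup>2)"
      by (intro mult_left_mono sum_mono2, insert hV, auto)
    finally show ?thesis using hO1[OF c] by simp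
  qed
  have ws: "(\<Sum>c<n. w c) = real k * real m"
  proof -
    have sq: "(\<Sum>a\<in>V i. u a c)\<^sup>2 = (\<Sum>a\<in>V i. \<Sum>b\<in>V i. u a c * u b c)" for i c
      by (simp add: power2_eq_square sum_product)
    have "(\<Sum>c<n. w c) = (\<Sum>i<k. \<Sum>c<n. \<Sum>a\<in>V i. \<Sum>b\<in>V i. u a c * u b c)"
      unfolding w_def sq by (rule sum.swap)
    also have "\<dots> = (\<Sum>i<k. \<Sum>a\<in>V i. \<Sum>b\<in>V i. \<Sum>c<n. u a c * u b c)"
    proof (rule sum.cong[OF refl])
      fix i
      show "(\<Sum>c<n. \<Sum>a\<in>V i. \<Sum>b\<in>V i. u a c * u b c) = (\<Sum>a\<in>V i. \<Sum>b\<in>V i. \<Sum>c<n. u a c * u b c)"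
        by (subst sum.swap, rule sum.cong[OF refl], rule sum.swap)
    qed
    also have "\<dots> = (\<Sum>i<k. \<Sum>a\<in>V i. \<Sum>b\<in>V i. (if a = b then 1 else 0))"
      by (intro sum.cong refl hO2, insert hV, auto)
    also have "\<dots> = (\<Sum>i<k. real m)"
      by (intro sum.cong refl, insert fin hc, auto)
    finally show ?thesis by simp
  qed
  show ?thesis unfolding eq
    by (rule sorted_weight[OF srt len k(2) k(1) w0 wm ws])
qed

lemma frac_sum_le:
  fixes A B :: "nat set" and g :: "nat \<Rightarrow> nat \<Rightarrow> bool" and d :: "nat \<Rightarrow> nat"
  assumes fA: "finite A" and fB: "finite B" and hd: "\<And>x. x \<in> A \<Longrightarrow> card {y\<in>B. g x y} \<le> d x"
  shows "(\<Sum>x\<in>A. \<Sum>y\<in>B. (if g x y then 1 / real (d x) else 0)) \<le> real (card {x\<in>A. \<exists>y\<in>B. g x y})"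
proof -
  have each: "(\<Sum>y\<in>B. (if g x y then 1 / real (d x) else 0)) \<le> (if (\<exists>y\<in>B. g x y) then 1 else 0)" if x: "x \<in> A" for x
  proof -
    have eq: "(\<Sum>y\<in>B. (if g x y then 1 / real (d x) else 0)) = real (card {y\<in>B. g x y}) / real (d x)"
      using sum.inter_filter[OF fB, of "\<lambda>_. 1 / real (d x)" "g x"] by simp
    show ?thesis
    proof (cases "\<exists>y\<in>B. g x y")
      case True
      hence "card {y\<in>B. g x y} > 0" using fB by (auto simp: card_gt_0_iff)
      hence "real (card {y\<in>B. g x y}) / real (d x) \<le> 1" using hd[OF x] by (simp add: divide_le_eq_1)
      thus ?thesis using eq True by simp
    next
      case False
      hence "{y\<in>B. g x y} = {}" by auto
      thus ?thesis using eq False by simp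
    qed
  qed
  have "(\<Sum>x\<in>A. \<Sum>y\<in>B. (if g x y then 1 / real (d x) else 0)) \<le> (\<Sum>x\<in>A. (if (\<exists>y\<in>B. g x y) then 1 else 0))"
    by (rule sum_mono, rule each)
  also have "\<dots> = real (card {x\<in>A. \<exists>y\<in>B. g x y})"
    using sum.inter_filter[OF fA, of "\<lambda>_. 1::real" "\<lambda>x. \<exists>y\<in>B. g x y"] by simp
  finally show ?thesis .
qed

lemma lap_weight_sym: "lap_weight E a b = lap_weight E b a"
  unfolding lap_weight_def by simp

lemma laplacian_carrier: "laplacian n E \<in> carrier_mat n n"
  unfolding laplacian_def by simp

lemma laplacian_sym: "transpose_mat (laplacian n E) = laplacian n E"
  by (rule eq_matI, auto simp: laplacian_def lap_weight_sym)

lemma laplacian_index: "a < n \<Longrightarrow> b < n \<Longrightarrow> laplacian n E $$ (a,b) =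
   (if a = b then (\<Sum>w<n. lap_weight E a w) else 0) - lap_weight E a b"
  unfolding laplacian_def by simp

lemma cut_bound:
  assumes aE: "E \<subseteq> {0..<n} \<times> {0..<n}" and V: "V \<subseteq> {..<n}"
  shows "(\<Sum>a\<in>V. \<Sum>b\<in>V. laplacian n E $$ (a,b)) \<le>
     real (card {a\<in>V. \<exists>b. (a,b) \<in> E \<and> b \<notin> V} + card {b. b \<notin> V \<and> (\<exists>a\<in>V. (b,a) \<in> E)})"
proof -
  have fV: "finite V" using V finite_subset by blast
  define W where "W = {..<n} - V"
  have fW: "finite W" unfolding W_def by simp
  have finE: "finite E" using aE finite_subset by blast
  have "(\<Sum>a\<in>V. \<Sum>b\<in>V. laplacian n E $$ (a,b)) = (\<Sum>a\<in>V. \<Sum>w\<in>W. lap_weight E a w)"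
  proof (rule sum.cong[OF refl])
    fix a assume a: "a \<in> V"
    have "(\<Sum>b\<in>V. laplacian n E $$ (a,b)) = (\<Sum>b\<in>V. (if a = b then (\<Sum>w<n. lap_weight E a w) else 0) - lap_weight E a b)"
      using a V by (intro sum.cong refl laplacian_index) auto
    also have "\<dots> = (\<Sum>w<n. lap_weight E a w) - (\<Sum>b\<in>V. lap_weight E a b)"
      using a fV by (simp add: sum_subtractf)
    also have "(\<Sum>w<n. lap_weight E a w) = (\<Sum>w\<in>W. lap_weight E a w) + (\<Sum>b\<in>V. lap_weight E a b)"
      unfolding W_def using V by (subst sum.subset_diff[of V "{..<n}"]) auto
    finally show "(\<Sum>b\<in>V. laplacian n E $$ (a,b)) = (\<Sum>w\<in>W. lap_weight E a w)" by simp
  qed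
  also have "\<dots> = (\<Sum>a\<in>V. \<Sum>w\<in>W. (if (a,w) \<in> E then 1 / real (out_deg E a) else 0))
      + (\<Sum>a\<in>V. \<Sum>w\<in>W. (if (w,a) \<in> E then 1 / real (out_deg E w) else 0))"
    unfolding lap_weight_def by (simp add: sum.distrib)
  also have "(\<Sum>a\<in>V. \<Sum>w\<in>W. (if (w,a) \<in> E then 1 / real (out_deg E w) else 0))
      = (\<Sum>w\<in>W. \<Sum>a\<in>V. (if (w,a) \<in> E then 1 / real (out_deg E w) else 0))"
    by (rule sum.swap)
  finally have eq: "(\<Sum>a\<in>V. \<Sum>b\<in>V. laplacian n E $$ (a,b)) = 
      (\<Sum>a\<in>V. \<Sum>w\<in>W. (if (a,w) \<in> E then 1 / real (out_deg E a) else 0)) +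
      (\<Sum>w\<in>W. \<Sum>a\<in>V. (if (w,a) \<in> E then 1 / real (out_deg E w) else 0))" .
  have dg: "card {y\<in>B. (x,y) \<in> E} \<le> out_deg E x" for x B
  proof -
    have "{y. (x,y) \<in> E} \<subseteq> snd ` E" by force
    hence "finite {y. (x,y) \<in> E}" using finE by (meson finite_imageI finite_subset)
    thus ?thesis unfolding out_deg_def by (rule card_mono) auto
  qed
  have 1: "(\<Sum>a\<in>V. \<Sum>w\<in>W. (if (a,w) \<in> E then 1 / real (out_deg E a) else 0)) \<le> real (card {a\<in>V. \<exists>w\<in>W. (a,w) \<in> E})"
    by (rule frac_sum_le[OF fV fW dg])
  have 2: "(\<Sum>w\<in>W. \<Sum>a\<in>V. (if (w,a) \<in> E then 1 / real (out_deg E w) else 0)) \<le> real (card {w\<in>W. \<exists>a\<in>V. (w,a) \<in> E})"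
    by (rule frac_sum_le[OF fW fV dg])
  have s1: "{a\<in>V. \<exists>w\<in>W. (a,w) \<in> E} = {a\<in>V. \<exists>b. (a,b) \<in> E \<and> b \<notin> V}"
  proof (intro Collect_cong conj_cong refl iffI)
    fix a assume "\<exists>w\<in>W. (a,w) \<in> E" thus "\<exists>b. (a,b) \<in> E \<and> b \<notin> V" unfolding W_def by auto
  next
    fix a assume "\<exists>b. (a,b) \<in> E \<and> b \<notin> V"
    then obtain b where "(a,b) \<in> E" "b \<notin> V" by auto
    moreover hence "b < n" using aE by auto
    ultimately show "\<exists>w\<in>W. (a,w) \<in> E" unfolding W_def by auto
  qed
  have s2: "{w\<in>W. \<exists>a\<in>V. (w,a) \<in> E} = {b. b \<notin> V \<and> (\<exists>a\<in>V. (b,a) \<in> E)}"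
    unfolding W_def using aE by auto
  show ?thesis unfolding eq using 1 2 s1 s2 by simp
qed

lemma exec_snoc: "exec n E p M (xs @ [m]) s = (case exec n E p M xs s of None \<Rightarrow> None | Some s' \<Rightarrow> step n E p M m s')"
  by (induct xs arbitrary: s) (auto split: option.splits)

lemma exec_prefix: "exec n E p M (xs @ ys) s = Some f \<Longrightarrow> \<exists>s'. exec n E p M xs s = Some s'"
  by (induct xs arbitrary: s) (auto split: option.splits)

definition io_out :: "nat \<Rightarrow> move \<Rightarrow> bool" where
  "io_out j m = (case m of Store i _ \<Rightarrow> i = j | Send i _ _ \<Rightarrow> i = j | _ \<Rightarrow> False)"
definition io_in :: "nat \<Rightarrow> move \<Rightarrow> bool" where
  "io_in j m = (case m of Load i _ \<Rightarrow> i = j | Send _ i _ \<Rightarrow> i = j | _ \<Rightarrow> False)"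
definition mvert :: "move \<Rightarrow> nat" where
  "mvert m = (case m of Compute _ v \<Rightarrow> v | Evict _ v \<Rightarrow> v | Store _ v \<Rightarrow> v | Load _ v \<Rightarrow> v | Send _ _ v \<Rightarrow> v)"

lemma io_le: "(if io_out j m then 1 else 0) + (if io_in j m then 1 else 0) \<le> move_io j m"
  by (cases m) (auto simp: io_out_def io_in_def)

lemma card_filter_sum: assumes "finite A" shows "card {x\<in>A. P x} = (\<Sum>x\<in>A. if P x then 1 else 0)"
proof -
  have "card {x\<in>A. P x} = (\<Sum>x\<in>{x\<in>A. P x}. 1)" by simp
  also have "\<dots> = (\<Sum>x\<in>A. if P x then 1 else 0)" by (rule sum.inter_filter[OF assms])
  finally show ?thesis .
qed

locale sched =
  fixes n :: nat and E :: "(nat \<times> nat) set" and p M :: nat and ms :: "move list"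
    and RR :: "nat \<Rightarrow> nat \<Rightarrow> nat set" and SS :: "nat \<Rightarrow> nat set" and CC :: "nat \<Rightarrow> nat set"
  assumes init0: "RR 0 = (\<lambda>_. {})" "SS 0 = {}" "CC 0 = {}"
    and st_step: "\<And>t. t < length ms \<Longrightarrow> step n E p M (ms ! t) (RR t, SS t, CC t) = Some (RR (Suc t), SS (Suc t), CC (Suc t))"
begin

lemma init_st: "RR 0 j = {}" "SS 0 = {}" "CC 0 = {}"
  using init0 by auto

lemma step_Compute:
  assumes "t < length ms" "ms ! t = Compute j v"
  shows "j < p \<and> v < n \<and> v \<notin> CC t \<and> (\<forall>u. (u,v) \<in> E \<longrightarrow> u \<in> RR t j) \<and> card (insert v (RR t j)) \<le> M
        \<and> RR (Suc t) = (RR t)(j := insert v (RR t j)) \<and> SS (Suc t) = SS t \<and> CC (Suc t) = insert v (CC t)"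
proof -
  have "(if j < p \<and> v < n \<and> v \<notin> CC t \<and> (\<forall>u. (u, v) \<in> E \<longrightarrow> u \<in> RR t j) \<and> card (insert v (RR t j)) \<le> M
      then Some ((RR t)(j := insert v (RR t j)), SS t, insert v (CC t)) else None) = Some (RR (Suc t), SS (Suc t), CC (Suc t))"
    using st_step[OF assms(1)] unfolding assms(2) by simp
  thus ?thesis by (cases "j < p \<and> v < n \<and> v \<notin> CC t \<and> (\<forall>u. (u, v) \<in> E \<longrightarrow> u \<in> RR t j) \<and> card (insert v (RR t j)) \<le> M") auto
qed

lemma step_Evict:
  assumes "t < length ms" "ms ! t = Evict j v"
  shows "j < p \<and> v \<in> RR t j \<and> RR (Suc t) = (RR t)(j := RR t j - {v}) \<and> SS (Suc t) = SS t \<and> CC (Suc t) = CC t"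
proof -
  have "(if j < p \<and> v \<in> RR t j then Some ((RR t)(j := RR t j - {v}), SS t, CC t) else None) = Some (RR (Suc t), SS (Suc t), CC (Suc t))"
    using st_step[OF assms(1)] unfolding assms(2) by simp
  thus ?thesis by (cases "j < p \<and> v \<in> RR t j") auto
qed

lemma step_Store:
  assumes "t < length ms" "ms ! t = Store j v"
  shows "j < p \<and> v \<in> RR t j \<and> RR (Suc t) = RR t \<and> SS (Suc t) = insert v (SS t) \<and> CC (Suc t) = CC t"
proof -
  have "(if j < p \<and> v \<in> RR t j then Some (RR t, insert v (SS t), CC t) else None) = Some (RR (Suc t), SS (Suc t), CC (Suc t))"
    using st_step[OF assms(1)] unfolding assms(2) by simp
  thus ?thesis by (cases "j < p \<and> v \<in> RR t j") auto
qed

lemma step_Load: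
  assumes "t < length ms" "ms ! t = Load j v"
  shows "j < p \<and> v \<in> SS t \<and> card (insert v (RR t j)) \<le> M
        \<and> RR (Suc t) = (RR t)(j := insert v (RR t j)) \<and> SS (Suc t) = SS t \<and> CC (Suc t) = CC t"
proof -
  have "(if j < p \<and> v \<in> SS t \<and> card (insert v (RR t j)) \<le> M then Some ((RR t)(j := insert v (RR t j)), SS t, CC t) else None) = Some (RR (Suc t), SS (Suc t), CC (Suc t))"
    using st_step[OF assms(1)] unfolding assms(2) by simp
  thus ?thesis by (cases "j < p \<and> v \<in> SS t \<and> card (insert v (RR t j)) \<le> M") auto
qed

lemma step_Send:
  assumes "t < length ms" "ms ! t = Send j j' v"
  shows "j < p \<and> j' < p \<and> j \<noteq> j' \<and> v \<in> RR t j \<and> card (insert v (RR t j')) \<le> M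
        \<and> RR (Suc t) = (RR t)(j' := insert v (RR t j')) \<and> SS (Suc t) = SS t \<and> CC (Suc t) = CC t"
proof -
  have "(if j < p \<and> j' < p \<and> j \<noteq> j' \<and> v \<in> RR t j \<and> card (insert v (RR t j')) \<le> M then Some ((RR t)(j' := insert v (RR t j')), SS t, CC t) else None) = Some (RR (Suc t), SS (Suc t), CC (Suc t))"
    using st_step[OF assms(1)] unfolding assms(2) by simp
  thus ?thesis by (cases "j < p \<and> j' < p \<and> j \<noteq> j' \<and> v \<in> RR t j \<and> card (insert v (RR t j')) \<le> M") auto
qed

lemma inv_mem:
  assumes "t \<le> length ms"
  shows "(\<forall>j. finite (RR t j) \<and> card (RR t j) \<le> M \<and> RR t j \<subseteq> CC t) \<and> SS t \<subseteq> CC t"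
  using assms
proof (induct t)
  case 0
  then show ?case by (simp add: init0)
next
  case (Suc t)
  hence t: "t < length ms" by simp
  from Suc have IH1: "\<And>j. finite (RR t j)" and IH2: "\<And>j. card (RR t j) \<le> M"
    and IH3: "\<And>j. RR t j \<subseteq> CC t" and IH4: "SS t \<subseteq> CC t"
    by auto
  show ?case
  proof (cases "ms ! t")
    case (Compute j v) 
    note D = step_Compute[OF t this]
    have "finite (RR (Suc t) j0) \<and> card (RR (Suc t) j0) \<le> M \<and> RR (Suc t) j0 \<subseteq> CC (Suc t)" for j0
    proof (cases "j0 = j")
      case True thus ?thesis using D IH1[of j] IH2[of j] IH3[of j] by auto
    next
      case False thus ?thesis using D IH1[of j0] IH2[of j0] IH3[of j0] by auto
    qed
    thus ?thesis using D IH1 IH2 IH3 IH4 by auto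
  next
    case (Evict j v)
    note D = step_Evict[OF t this]
    have "finite (RR (Suc t) j0) \<and> card (RR (Suc t) j0) \<le> M \<and> RR (Suc t) j0 \<subseteq> CC (Suc t)" for j0
    proof (cases "j0 = j")
      case True thus ?thesis using D IH1[of j] IH2[of j] IH3[of j] card_Diff1_le[of "RR t j" v] by auto
    next
      case False thus ?thesis using D IH1[of j0] IH2[of j0] IH3[of j0] by auto
    qed
    thus ?thesis using D IH1 IH2 IH3 IH4 by auto
  next
    case (Store j v) 
    note D = step_Store[OF t this]
    show ?thesis using D IH1 IH2 IH3 IH4 by auto
  next
    case (Load j v)
    note D = step_Load[OF t this]
    have "finite (RR (Suc t) j0) \<and> card (RR (Suc t) j0) \<le> M \<and> RR (Suc t) j0 \<subseteq> CC (Suc t)" for j0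
    proof (cases "j0 = j")
      case True thus ?thesis using D IH1[of j] IH2[of j] IH3[of j] IH4 by auto
    next
      case False thus ?thesis using D IH1[of j0] IH2[of j0] IH3[of j0] by auto
    qed
    thus ?thesis using D IH1 IH2 IH3 IH4 by auto
  next
    case (Send j j' v)
    note D = step_Send[OF t this]
    have "finite (RR (Suc t) j0) \<and> card (RR (Suc t) j0) \<le> M \<and> RR (Suc t) j0 \<subseteq> CC (Suc t)" for j0
    proof (cases "j0 = j'")
      case True thus ?thesis using D IH1[of j'] IH2[of j'] IH3[of j'] IH3[of j] by auto
    next
      case False thus ?thesis using D IH1[of j0] IH2[of j0] IH3[of j0] by auto
    qed
    thus ?thesis using D IH1 IH2 IH3 IH4 by auto
  qed
qed

lemma C_Suc: assumes t: "t < length ms"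
  shows "CC (Suc t) = (case ms ! t of Compute j v \<Rightarrow> insert v (CC t) | _ \<Rightarrow> CC t)"
proof (cases "ms ! t")
  case (Compute j v) then show ?thesis using step_Compute[OF t Compute] by simp
next
  case (Evict j v) then show ?thesis using step_Evict[OF t Evict] by simp
next
  case (Store j v) then show ?thesis using step_Store[OF t Store] by simp
next
  case (Load j v) then show ?thesis using step_Load[OF t Load] by simp
next
  case (Send j j' v) then show ?thesis using step_Send[OF t Send] by simp
qed

lemma C_mono_Suc: assumes t: "t < length ms" shows "CC t \<subseteq> CC (Suc t)"
  using C_Suc[OF t] by (cases "ms ! t") auto

lemma C_mono: "t \<le> t' \<Longrightarrow> t' \<le> length ms \<Longrightarrow> CC t \<subseteq> CC t'"
proof (induct t' rule: dec_induct)
  case base then show ?case by simp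
next
  case (step t') then show ?case using C_mono_Suc[of t'] by auto
qed

lemma C_computed: "t \<le> length ms \<Longrightarrow> x \<in> CC t \<Longrightarrow> \<exists>s<t. \<exists>j. ms ! s = Compute j x"
proof (induct t)
  case 0 then show ?case by (simp add: init0)
next
  case (Suc t)
  hence t: "t < length ms" by simp
  show ?case
  proof (cases "x \<in> CC t")
    case True
    then obtain s j where "s < t" "ms ! s = Compute j x" using Suc(1) t by auto
    thus ?thesis by (intro exI[of _ s]) auto
  next
    case False
    have "x \<in> CC (Suc t)" by fact
    hence "\<exists>j. ms ! t = Compute j x" using False C_Suc[OF t] by (cases "ms ! t") auto
    thus ?thesis by blast
  qed
qed

lemma compute_inj:
  assumes "s1 < length ms" "s2 < length ms" "ms ! s1 = Compute j1 x" "ms ! s2 = Compute j2 x"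
  shows "s1 = s2"
proof (rule ccontr)
  assume ne: "s1 \<noteq> s2"
  { fix a b ja jb assume ab: "a < b" "b < length ms" "ms ! a = Compute ja x" "ms ! b = Compute jb x"
    have "x \<in> CC (Suc a)" using step_Compute[of a] ab by auto
    moreover have "CC (Suc a) \<subseteq> CC b" using ab by (intro C_mono) auto
    moreover have "x \<notin> CC b" using step_Compute[of b] ab by auto
    ultimately have False by auto }
  note key = this
  from ne have "s1 < s2 \<or> s2 < s1" by arith
  thus False
  proof
    assume "s1 < s2" thus False using key[of s1 s2 j1 j2] assms by blast
  next
    assume "s2 < s1" thus False using key[of s2 s1 j2 j1] assms by blast
  qed
qed

lemma R_Suc: assumes t: "t < length ms"
  shows "RR (Suc t) i = (case ms ! t of
      Compute j v \<Rightarrow> (if i = j then insert v (RR t i) else RR t i)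
    | Evict j v \<Rightarrow> (if i = j then RR t i - {v} else RR t i)
    | Store j v \<Rightarrow> RR t i
    | Load j v \<Rightarrow> (if i = j then insert v (RR t i) else RR t i)
    | Send j j' v \<Rightarrow> (if i = j' then insert v (RR t i) else RR t i))"
proof (cases "ms ! t")
  case (Compute j v) then show ?thesis using step_Compute[OF t Compute] by simp
next
  case (Evict j v) then show ?thesis using step_Evict[OF t Evict] by simp
next
  case (Store j v) then show ?thesis using step_Store[OF t Store] by simp
next
  case (Load j v) then show ?thesis using step_Load[OF t Load] by simp
next
  case (Send j j' v) then show ?thesis using step_Send[OF t Send] by simp
qed

lemma S_Suc: assumes t: "t < length ms"
  shows "SS (Suc t) = (case ms ! t of Store j v \<Rightarrow> insert v (SS t) | _ \<Rightarrow> SS t)"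
proof (cases "ms ! t")
  case (Compute j v) then show ?thesis using step_Compute[OF t Compute] by simp
next
  case (Evict j v) then show ?thesis using step_Evict[OF t Evict] by simp
next
  case (Store j v) then show ?thesis using step_Store[OF t Store] by simp
next
  case (Load j v) then show ?thesis using step_Load[OF t Load] by simp
next
  case (Send j j' v) then show ?thesis using step_Send[OF t Send] by simp
qed

lemma L_in:
  assumes "a \<le> t" "t \<le> length ms" "x \<in> RR t j"
  shows "x \<in> RR a j \<or> (\<exists>s. a \<le> s \<and> s < t \<and> (ms ! s = Load j x \<or> ms ! s = Compute j x \<or> (\<exists>j'. ms ! s = Send j' j x)))"
  using assms
proof (induct t rule: dec_induct)
  case base then show ?case by simp
next
  case (step t)
  hence t: "t < length ms" by simp
  show ?case
  proof (cases "x \<in> RR t j")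
    case True
    with step show ?thesis by (meson less_SucI Suc_leD)
  next
    case False
    have "ms ! t = Load j x \<or> ms ! t = Compute j x \<or> (\<exists>j'. ms ! t = Send j' j x)"
      using False step(5) R_Suc[OF t, of j] by (cases "ms ! t") (auto split: if_splits)
    thus ?thesis using step(1) by (intro disjI2 exI[of _ t]) auto
  qed
qed

definition only_j where "only_j x j t \<longleftrightarrow> x \<notin> SS t \<and> (\<forall>j'. j' \<noteq> j \<longrightarrow> x \<notin> RR t j')"
definition nowhere where "nowhere x t \<longleftrightarrow> x \<notin> SS t \<and> (\<forall>j'. x \<notin> RR t j')"

lemma L_only:
  assumes "a \<le> t" "t \<le> length ms" "x \<in> CC a" "only_j x j a"
    and "\<And>s. a \<le> s \<Longrightarrow> s < t \<Longrightarrow> ms ! s \<noteq> Store j x \<and> (\<forall>j'. ms ! s \<noteq> Send j j' x)"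
  shows "only_j x j t"
  using assms
proof (induct t rule: dec_induct)
  case base then show ?case by simp
next
  case (step t)
  hence t: "t < length ms" by simp
  have IH: "only_j x j t" using step by auto
  have xC: "x \<in> CC t" using C_mono[of a t] step by auto
  have no: "ms ! t \<noteq> Store j x" "\<And>j'. ms ! t \<noteq> Send j j' x" using step(7)[of t] step(1) by auto
  show ?case
  proof (cases "ms ! t")
    case (Compute i v)
    hence "v \<noteq> x" using step_Compute[OF t Compute] xC by auto
    thus ?thesis using IH R_Suc[OF t] S_Suc[OF t] Compute unfolding only_j_def by auto
  next
    case (Evict i v)
    thus ?thesis using IH R_Suc[OF t] S_Suc[OF t] unfolding only_j_def by auto
  next
    case (Store i v)
    have "v = x \<Longrightarrow> i = j" using step_Store[OF t Store] IH unfolding only_j_def by auto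
    hence "v \<noteq> x" using no Store by auto
    thus ?thesis using IH R_Suc[OF t] S_Suc[OF t] Store unfolding only_j_def by auto
  next
    case (Load i v)
    have "v \<noteq> x" using step_Load[OF t Load] IH unfolding only_j_def by auto
    thus ?thesis using IH R_Suc[OF t] S_Suc[OF t] Load unfolding only_j_def by auto
  next
    case (Send i i' v)
    have "v = x \<Longrightarrow> i = j" using step_Send[OF t Send] IH unfolding only_j_def by auto
    hence "v \<noteq> x" using no Send by auto
    thus ?thesis using IH R_Suc[OF t] S_Suc[OF t] Send unfolding only_j_def by auto
  qed
qed

lemma L_none:
  assumes "a \<le> t" "t \<le> length ms" "x \<in> CC a" "nowhere x a"
  shows "nowhere x t"
  using assms
proof (induct t rule: dec_induct)
  case base then show ?case by simp
next
  case (step t)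
  hence t: "t < length ms" by simp
  have IH: "nowhere x t" using step by auto
  have xC: "x \<in> CC t" using C_mono[of a t] step by auto
  show ?case
  proof (cases "ms ! t")
    case (Compute i v)
    hence "v \<noteq> x" using step_Compute[OF t Compute] xC by auto
    thus ?thesis using IH R_Suc[OF t] S_Suc[OF t] Compute unfolding nowhere_def by auto
  next
    case (Evict i v)
    thus ?thesis using IH R_Suc[OF t] S_Suc[OF t] unfolding nowhere_def by auto
  next
    case (Store i v)
    have "v \<noteq> x" using step_Store[OF t Store] IH unfolding nowhere_def by auto
    thus ?thesis using IH R_Suc[OF t] S_Suc[OF t] Store unfolding nowhere_def by auto
  next
    case (Load i v)
    have "v \<noteq> x" using step_Load[OF t Load] IH unfolding nowhere_def by auto
    thus ?thesis using IH R_Suc[OF t] S_Suc[OF t] Load unfolding nowhere_def by auto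
  next
    case (Send i i' v)
    have "v \<noteq> x" using step_Send[OF t Send] IH unfolding nowhere_def by auto
    thus ?thesis using IH R_Suc[OF t] S_Suc[OF t] Send unfolding nowhere_def by auto
  qed
qed

lemma interval_bound:
  assumes aE: "E \<subseteq> {0..<n} \<times> {0..<n}" and fin: "CC (length ms) = {0..<n}"
    and ab: "\<alpha> \<le> \<beta>" "\<beta> \<le> length ms"
    and V: "V = {v. \<exists>t. \<alpha> \<le> t \<and> t < \<beta> \<and> ms ! t = Compute j v}"
  shows "card {a\<in>V. \<exists>b. (a,b) \<in> E \<and> b \<notin> V} + card {b. b \<notin> V \<and> (\<exists>a\<in>V. (b,a) \<in> E)}
     \<le> 2 * M + (\<Sum>t\<in>{\<alpha>..<\<beta>}. move_io j (ms ! t))"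
proof -
  define T where "T = {\<alpha>..<\<beta>}"
  define OS where "OS = (\<lambda>t. mvert (ms ! t)) ` {t\<in>T. io_out j (ms ! t)}"
  define IS where "IS = (\<lambda>t. mvert (ms ! t)) ` {t\<in>T. io_in j (ms ! t)}"
  have finT: "finite T" unfolding T_def by simp
  have invb: "finite (RR \<beta> j) \<and> card (RR \<beta> j) \<le> M" using inv_mem[OF ab(2)] by auto
  have inva: "finite (RR \<alpha> j) \<and> card (RR \<alpha> j) \<le> M" using inv_mem[of \<alpha>] ab by auto
  have Out: "{a\<in>V. \<exists>b. (a,b) \<in> E \<and> b \<notin> V} \<subseteq> RR \<beta> j \<union> OS"
  proof
    fix a assume "a \<in> {a\<in>V. \<exists>b. (a,b) \<in> E \<and> b \<notin> V}"
    then obtain b ta where ab_E: "(a,b) \<in> E" and bV: "b \<notin> V" and ta: "\<alpha> \<le> ta" "ta < \<beta>"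
      and cta: "ms ! ta = Compute j a" unfolding V by auto
    show "a \<in> RR \<beta> j \<union> OS"
    proof (rule ccontr)
      assume "a \<notin> RR \<beta> j \<union> OS"
      hence aR: "a \<notin> RR \<beta> j" and aOS: "a \<notin> OS" by auto
      have noout: "ms ! s \<noteq> Store j a \<and> (\<forall>j'. ms ! s \<noteq> Send j j' a)" if "Suc ta \<le> s" "s < \<beta>" for s
      proof -
        have sT: "s \<in> T" using that ta unfolding T_def by auto
        { assume "ms ! s = Store j a \<or> (\<exists>j'. ms ! s = Send j j' a)"
          hence "io_out j (ms ! s) \<and> mvert (ms ! s) = a" by (auto simp: io_out_def mvert_def)
          hence "a \<in> OS" using sT unfolding OS_def by force }
        thus ?thesis using aOS by auto
      qed
      have "b < n" using ab_E aE by auto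
      hence "b \<in> CC (length ms)" using fin by auto
      then obtain tb j' where tb: "tb < length ms" "ms ! tb = Compute j' b"
        using C_computed[of "length ms" b] by auto
      have "a \<in> RR tb j'" using step_Compute[OF tb] ab_E by auto
      hence aCtb: "a \<in> CC tb" using inv_mem[of tb] tb by auto
      have ta_ms: "ta < length ms" using ta ab by auto
      have aCta: "a \<notin> CC ta" using step_Compute[OF ta_ms cta] by auto
      have "ta < tb"
      proof (rule ccontr)
        assume "\<not> ta < tb"
        hence "CC tb \<subseteq> CC ta" using C_mono[of tb ta] ta_ms by auto
        thus False using aCtb aCta by auto
      qed
      have D: "RR (Suc ta) = (RR ta)(j := insert a (RR ta j))" "SS (Suc ta) = SS ta" "CC (Suc ta) = insert a (CC ta)"
        using step_Compute[OF ta_ms cta] by auto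
      have "SS ta \<subseteq> CC ta" "\<And>i. RR ta i \<subseteq> CC ta" using inv_mem[of ta] ta_ms by auto
      hence only0: "only_j a j (Suc ta)" using aCta D unfolding only_j_def by auto
      have aC0: "a \<in> CC (Suc ta)" using D by auto
      show False
      proof (cases "tb < \<beta>")
        case True
        have "j' \<noteq> j" using bV tb ta \<open>ta < tb\<close> True unfolding V by auto
        have "only_j a j tb" using L_only[OF _ _ aC0 only0, of tb] \<open>ta < tb\<close> tb noout True by auto
        thus False using \<open>j' \<noteq> j\<close> \<open>a \<in> RR tb j'\<close> unfolding only_j_def by auto
      next
        case False
        have "only_j a j \<beta>" using L_only[OF _ _ aC0 only0, of \<beta>] ta ab noout by auto
        hence "nowhere a \<beta>" using aR unfolding only_j_def nowhere_def by auto
        moreover have "a \<in> CC \<beta>" using C_mono[of "Suc ta" \<beta>] aC0 ta ab by auto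
        ultimately have "nowhere a tb" using L_none[of \<beta> tb a] False tb by auto
        thus False using \<open>a \<in> RR tb j'\<close> unfolding nowhere_def by auto
      qed
    qed
  qed
  have In: "{b. b \<notin> V \<and> (\<exists>a\<in>V. (b,a) \<in> E)} \<subseteq> RR \<alpha> j \<union> IS"
  proof
    fix b assume "b \<in> {b. b \<notin> V \<and> (\<exists>a\<in>V. (b,a) \<in> E)}"
    then obtain a ta where ab_E: "(b,a) \<in> E" and bV: "b \<notin> V" and ta: "\<alpha> \<le> ta" "ta < \<beta>"
      and cta: "ms ! ta = Compute j a" unfolding V by auto
    have ta_ms: "ta < length ms" using ta ab by auto
    have "b \<in> RR ta j" using step_Compute[OF ta_ms cta] ab_E by auto
    from L_in[OF ta(1) _ this] ta_ms
    have "b \<in> RR \<alpha> j \<or> (\<exists>s. \<alpha> \<le> s \<and> s < ta \<and> (ms ! s = Load j b \<or> ms ! s = Compute j b \<or> (\<exists>j'. ms ! s = Send j' j b)))"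
      by auto
    thus "b \<in> RR \<alpha> j \<union> IS"
    proof
      assume "\<exists>s. \<alpha> \<le> s \<and> s < ta \<and> (ms ! s = Load j b \<or> ms ! s = Compute j b \<or> (\<exists>j'. ms ! s = Send j' j b))"
      then obtain s where s: "\<alpha> \<le> s" "s < ta" and sm: "ms ! s = Load j b \<or> ms ! s = Compute j b \<or> (\<exists>j'. ms ! s = Send j' j b)"
        by auto
      have "ms ! s \<noteq> Compute j b" using bV s ta unfolding V by auto
      hence "io_in j (ms ! s) \<and> mvert (ms ! s) = b" using sm by (auto simp: io_in_def mvert_def)
      moreover have "s \<in> T" using s ta unfolding T_def by auto
      ultimately show ?thesis unfolding IS_def by auto
    qed auto
  qed
  have cO: "card OS \<le> card {t\<in>T. io_out j (ms ! t)}" unfolding OS_def by (rule card_image_le, simp add: finT)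
  have cI: "card IS \<le> card {t\<in>T. io_in j (ms ! t)}" unfolding IS_def by (rule card_image_le, simp add: finT)
  have fO: "finite OS" "finite IS" unfolding OS_def IS_def using finT by auto
  have "card {a\<in>V. \<exists>b. (a,b) \<in> E \<and> b \<notin> V} \<le> card (RR \<beta> j \<union> OS)"
    by (rule card_mono[OF _ Out], insert invb fO, auto)
  also have "\<dots> \<le> M + card OS" using card_Un_le[of "RR \<beta> j" OS] invb by auto
  finally have 1: "card {a\<in>V. \<exists>b. (a,b) \<in> E \<and> b \<notin> V} \<le> M + card OS" .
  have "card {b. b \<notin> V \<and> (\<exists>a\<in>V. (b,a) \<in> E)} \<le> card (RR \<alpha> j \<union> IS)"
    by (rule card_mono[OF _ In], insert inva fO, auto)
  also have "\<dots> \<le> M + card IS" using card_Un_le[of "RR \<alpha> j" IS] inva by auto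
  finally have 2: "card {b. b \<notin> V \<and> (\<exists>a\<in>V. (b,a) \<in> E)} \<le> M + card IS" .
  have "card {t\<in>T. io_out j (ms ! t)} + card {t\<in>T. io_in j (ms ! t)}
      = (\<Sum>t\<in>T. (if io_out j (ms ! t) then 1 else 0) + (if io_in j (ms ! t) then 1 else 0))"
    by (simp add: card_filter_sum[OF finT] sum.distrib)
  also have "\<dots> \<le> (\<Sum>t\<in>T. move_io j (ms ! t))" by (rule sum_mono, rule io_le)
  finally show ?thesis using 1 2 cO cI unfolding T_def by linarith
qed

end

definition cntc :: "move list \<Rightarrow> nat \<Rightarrow> nat \<Rightarrow> nat" where
  "cntc ms j t = card {s. s < t \<and> (\<exists>v. ms ! s = Compute j v)}"

lemma cntc_0: "cntc ms j 0 = 0" unfolding cntc_def by simp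

lemma cntc_Suc: "cntc ms j (Suc t) = cntc ms j t + (if \<exists>v. ms ! t = Compute j v then 1 else 0)"
proof -
  let ?P = "\<lambda>s. \<exists>v. ms ! s = Compute j v"
  have "{s. s < Suc t \<and> ?P s} = {s. s < t \<and> ?P s} \<union> (if ?P t then {t} else {})"
    by (cases "?P t") (auto simp: less_Suc_eq)
  thus ?thesis unfolding cntc_def by (auto simp: card_insert_if)
qed

lemma cntc_mono: "t \<le> t' \<Longrightarrow> cntc ms j t \<le> cntc ms j t'"
  unfolding cntc_def by (rule card_mono) auto

lemma least_level:
  fixes c :: "nat \<Rightarrow> nat"
  assumes c0: "c 0 = 0" and cS: "\<And>t. c (Suc t) \<le> Suc (c t)" and lv: "x \<le> c N"
  shows "(LEAST t. x \<le> c t) \<le> N \<and> c (LEAST t. x \<le> c t) = x"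
proof -
  let ?a = "LEAST t. x \<le> c t"
  have ge: "x \<le> c ?a" by (rule LeastI[of _ N], rule lv)
  have le: "?a \<le> N" by (rule Least_le, rule lv)
  have "c ?a \<le> x"
  proof (cases ?a)
    case 0 thus ?thesis using c0 by simp
  next
    case (Suc t)
    have "t < ?a" using Suc by simp
    hence "\<not> x \<le> c t" by (rule not_less_Least)
    thus ?thesis using cS[of t] Suc by simp
  qed
  thus ?thesis using ge le by simp
qed

lemma sum_telescope_intervals:
  fixes f :: "nat \<Rightarrow> 'b::comm_monoid_add"
  assumes "\<And>i i'. i \<le> i' \<Longrightarrow> i' \<le> k \<Longrightarrow> a i \<le> a i'"
  shows "(\<Sum>i<k. \<Sum>t\<in>{a i..<a (Suc i)}. f t) = (\<Sum>t\<in>{a 0..<a k}. f t)"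
  using assms
proof (induct k)
  case 0 then show ?case by simp
next
  case (Suc k)
  have IH: "(\<Sum>i<k. \<Sum>t\<in>{a i..<a (Suc i)}. f t) = (\<Sum>t\<in>{a 0..<a k}. f t)"
    using Suc by auto
  have "a 0 \<le> a k" "a k \<le> a (Suc k)" using Suc(2) by auto
  thus ?case using IH by (simp add: sum.atLeastLessThan_concat)
qed

lemma proc_io_sum: "proc_io j ms = (\<Sum>t<length ms. move_io j (ms ! t))"
  unfolding proc_io_def by (simp add: sum_list_sum_nth atLeast0LessThan)

context sched
begin

lemma segments:
  assumes aE: "E \<subseteq> {0..<n} \<times> {0..<n}" and fin: "CC (length ms) = {0..<n}"
    and km: "k * m \<le> cntc ms j (length ms)"
  shows "\<exists>V. (\<forall>i<k. V i \<subseteq> {..<n} \<and> card (V i) = m) \<and> (\<forall>i<k. \<forall>i'<k. i \<noteq> i' \<longrightarrow> V i \<inter> V i' = {}) \<and>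
     (\<Sum>i<k. card {a\<in>V i. \<exists>b. (a,b) \<in> E \<and> b \<notin> V i} + card {b. b \<notin> V i \<and> (\<exists>a\<in>V i. (b,a) \<in> E)})
        \<le> 2 * k * M + proc_io j ms"
proof -
  let ?N = "length ms"
  define c where "c = cntc ms j"
  define a where "a i = (LEAST t. i * m \<le> c t)" for i
  define V where "V i = {v. \<exists>t. a i \<le> t \<and> t < a (Suc i) \<and> ms ! t = Compute j v}" for i
  have c0: "c 0 = 0" unfolding c_def by (rule cntc_0)
  have cS: "c (Suc t) \<le> Suc (c t)" for t unfolding c_def cntc_Suc by simp
  have lvl: "i * m \<le> c ?N" if "i \<le> k" for i
    using km that unfolding c_def by (meson le_trans mult_le_mono1)
  have aprop: "a i \<le> ?N \<and> c (a i) = i * m" if "i \<le> k" for i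
    unfolding a_def by (rule least_level[OF c0 cS lvl[OF that]])
  have amono: "a i \<le> a i'" if "i \<le> i'" "i' \<le> k" for i i'
  proof -
    have "i * m \<le> c (a i')" using aprop[OF that(2)] that(1) by simp
    thus ?thesis unfolding a_def by (rule Least_le)
  qed
  let ?P = "\<lambda>s. \<exists>v. ms ! s = Compute j v"
  have cardV: "card (V i) = m" if i: "i < k" for i
  proof -
    define T where "T = {t. a i \<le> t \<and> t < a (Suc i) \<and> ?P t}"
    have VT: "V i = (\<lambda>t. mvert (ms ! t)) ` T"
    proof
      show "V i \<subseteq> (\<lambda>t. mvert (ms ! t)) ` T"
      proof
        fix v assume "v \<in> V i"
        then obtain t where t: "a i \<le> t" "t < a (Suc i)" "ms ! t = Compute j v" unfolding V_def by auto
        hence "t \<in> T" "mvert (ms ! t) = v" unfolding T_def by (auto simp: mvert_def)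
        thus "v \<in> (\<lambda>t. mvert (ms ! t)) ` T" by (metis image_eqI)
      qed
    next
      show "(\<lambda>t. mvert (ms ! t)) ` T \<subseteq> V i" unfolding V_def T_def by (auto simp: mvert_def)
    qed
    have Tlt: "T \<subseteq> {..<?N}" unfolding T_def using aprop[of "Suc i"] i by auto
    have inj: "inj_on (\<lambda>t. mvert (ms ! t)) T"
    proof (rule inj_onI)
      fix x y assume x: "x \<in> T" and y: "y \<in> T" and eq: "mvert (ms ! x) = mvert (ms ! y)"
      from x obtain v where v: "ms ! x = Compute j v" unfolding T_def by auto
      from y obtain w where w: "ms ! y = Compute j w" unfolding T_def by auto
      have "v = w" using eq v w by (simp add: mvert_def)
      thus "x = y" using compute_inj[of x y j v j] v w x y Tlt by auto
    qed
    have split: "{s. s < a (Suc i) \<and> ?P s} = {s. s < a i \<and> ?P s} \<union> T"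
      unfolding T_def using amono[of i "Suc i"] i by auto
    have "card {s. s < a (Suc i) \<and> ?P s} = card {s. s < a i \<and> ?P s} + card T"
      unfolding split by (rule card_Un_disjoint) (auto simp: T_def)
    hence "c (a (Suc i)) = c (a i) + card T" unfolding c_def cntc_def .
    hence "card T = m" using aprop[of i] aprop[of "Suc i"] i by simp
    thus ?thesis unfolding VT using card_image[OF inj] by simp
  qed
  have Vsub: "V i \<subseteq> {..<n}" if i: "i < k" for i
  proof
    fix v assume "v \<in> V i"
    then obtain t where t: "a i \<le> t" "t < a (Suc i)" "ms ! t = Compute j v" unfolding V_def by auto
    have "t < ?N" using t aprop[of "Suc i"] i by auto
    thus "v \<in> {..<n}" using step_Compute[of t j v] t by auto
  qed
  have Vdisj: "V i \<inter> V i' = {}" if "i < k" "i' < k" "i \<noteq> i'" for i i'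
  proof (rule ccontr)
    assume "V i \<inter> V i' \<noteq> {}"
    then obtain v t t' where t: "a i \<le> t" "t < a (Suc i)" "ms ! t = Compute j v"
      and t': "a i' \<le> t'" "t' < a (Suc i')" "ms ! t' = Compute j v" unfolding V_def by blast
    have "t < ?N" "t' < ?N" using t t' aprop[of "Suc i"] aprop[of "Suc i'"] that by auto
    hence "t = t'" using compute_inj t(3) t'(3) by blast
    show False
    proof (cases "i < i'")
      case True
      hence "a (Suc i) \<le> a i'" using amono[of "Suc i" i'] that by auto
      thus False using t t' \<open>t = t'\<close> by auto
    next
      case False
      hence "a (Suc i') \<le> a i" using amono[of "Suc i'" i] that by auto
      thus False using t t' \<open>t = t'\<close> by auto
    qed
  qed
  have ib: "card {x\<in>V i. \<exists>b. (x,b) \<in> E \<and> b \<notin> V i} + card {b. b \<notin> V i \<and> (\<exists>x\<in>V i. (b,x) \<in> E)}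
     \<le> 2 * M + (\<Sum>t\<in>{a i..<a (Suc i)}. move_io j (ms ! t))" if i: "i < k" for i
    by (rule interval_bound[OF aE fin _ _ V_def], insert amono[of i "Suc i"] aprop[of "Suc i"] i, auto)
  have "(\<Sum>i<k. card {x\<in>V i. \<exists>b. (x,b) \<in> E \<and> b \<notin> V i} + card {b. b \<notin> V i \<and> (\<exists>x\<in>V i. (b,x) \<in> E)})
     \<le> (\<Sum>i<k. 2 * M + (\<Sum>t\<in>{a i..<a (Suc i)}. move_io j (ms ! t)))"
    by (rule sum_mono, rule ib, simp)
  also have "\<dots> = 2 * k * M + (\<Sum>t\<in>{a 0..<a k}. move_io j (ms ! t))"
    by (simp add: sum.distrib sum_telescope_intervals[of k a, OF amono])
  also have "(\<Sum>t\<in>{a 0..<a k}. move_io j (ms ! t)) \<le> (\<Sum>t<?N. move_io j (ms ! t))"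
    by (rule sum_mono2, insert aprop[of k], auto)
  finally show ?thesis
    using cardV Vsub Vdisj unfolding proc_io_sum
    by (intro exI[of _ V]) auto
qed

end

lemma pigeon:
  fixes f :: "nat \<Rightarrow> nat"
  assumes p: "p \<ge> 1" and s: "(\<Sum>j<p. f j) = n"
  shows "\<exists>j<p. n \<le> p * f j"
proof (rule ccontr)
  assume "\<not> ?thesis"
  hence lt: "\<And>j. j < p \<Longrightarrow> p * f j < n" by auto
  have "0 \<in> {..<p}" using p by simp
  hence ne: "{..<p} \<noteq> {}" by blast
  have "(\<Sum>j<p. p * f j) < (\<Sum>j<p. n)"
    by (rule sum_strict_mono[OF _ ne], insert lt, auto)
  also have "\<dots> = p * n" by simp
  finally have lt2: "(\<Sum>j<p. p * f j) < p * n" .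
  have "(\<Sum>j<p. p * f j) = p * n" using s by (simp add: sum_distrib_left[symmetric])
  thus False using lt2 by simp
qed

context sched begin

lemma total_computes:
  assumes fin: "CC (length ms) = {0..<n}"
  shows "(\<Sum>j<p. cntc ms j (length ms)) = n"
proof -
  let ?N = "length ms"
  define T where "T = {s. s < ?N \<and> (\<exists>j v. ms ! s = Compute j v)}"
  define Tj where "Tj j = {s. s < ?N \<and> (\<exists>v. ms ! s = Compute j v)}" for j
  have TU: "T = (\<Union>j<p. Tj j)"
  proof
    show "T \<subseteq> (\<Union>j<p. Tj j)"
    proof
      fix s assume "s \<in> T"
      then obtain j v where s: "s < ?N" "ms ! s = Compute j v" unfolding T_def by auto
      hence "j < p" using step_Compute[OF s] by auto
      thus "s \<in> (\<Union>j<p. Tj j)" using s unfolding Tj_def by auto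
    qed
  qed (auto simp: T_def Tj_def)
  have "card T = (\<Sum>j<p. card (Tj j))"
    unfolding TU by (rule card_UN_disjoint) (auto simp: Tj_def)
  also have "\<dots> = (\<Sum>j<p. cntc ms j ?N)" unfolding Tj_def cntc_def by simp
  finally have 1: "card T = (\<Sum>j<p. cntc ms j ?N)" .
  have inj: "inj_on (\<lambda>t. mvert (ms ! t)) T"
  proof (rule inj_onI)
    fix x y assume x: "x \<in> T" and y: "y \<in> T" and eq: "mvert (ms ! x) = mvert (ms ! y)"
    from x obtain j v where v: "ms ! x = Compute j v" "x < ?N" unfolding T_def by auto
    from y obtain j' w where w: "ms ! y = Compute j' w" "y < ?N" unfolding T_def by auto
    have "v = w" using eq v w by (simp add: mvert_def)
    thus "x = y" using compute_inj[of x y j v j'] v w by auto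
  qed
  have img: "(\<lambda>t. mvert (ms ! t)) ` T = CC ?N"
  proof
    show "(\<lambda>t. mvert (ms ! t)) ` T \<subseteq> CC ?N"
    proof
      fix x assume "x \<in> (\<lambda>t. mvert (ms ! t)) ` T"
      then obtain s j v where s: "s < ?N" "ms ! s = Compute j v" "x = v" unfolding T_def by (auto simp: mvert_def)
      have "x \<in> CC (Suc s)" using step_Compute[OF s(1,2)] s by auto
      moreover have "CC (Suc s) \<subseteq> CC ?N" using C_mono[of "Suc s" ?N] s by auto
      ultimately show "x \<in> CC ?N" by auto
    qed
  next
    show "CC ?N \<subseteq> (\<lambda>t. mvert (ms ! t)) ` T"
    proof
      fix x assume "x \<in> CC ?N"
      then obtain s j where "s < ?N" "ms ! s = Compute j x" using C_computed[of ?N x] by auto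
      hence "s \<in> T" "mvert (ms ! s) = x" unfolding T_def by (auto simp: mvert_def)
      thus "x \<in> (\<lambda>t. mvert (ms ! t)) ` T" by (metis image_eqI)
    qed
  qed
  have "card T = n" using card_image[OF inj] img fin by simp
  thus ?thesis using 1 by simp
qed

end

theorem theorem4p6:
  fixes n p M k :: nat and E :: "(nat \<times> nat) set" and ms :: "move list" and ls :: "real list"
  assumes "comp_graph n E"
    and "p \<ge> 1"
    and "valid_par_schedule n E p M ms"
    and "sorted_eigenvalues (laplacian n E) ls"
    and "k \<ge> 1"
  shows "\<exists>j<p. real (proc_io j ms) \<ge>
           real (n div (k * p)) * (\<Sum>i<k. ls ! i) - 2 * real k * real M"
proof -
  note cg = assms(1) and p1 = assms(2) and vs = assms(3) and se = assms(4) and k1 = assms(5)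
  have aE: "E \<subseteq> {0..<n} \<times> {0..<n}" using cg unfolding comp_graph_def by auto
  define m where "m = n div (k * p)"
  show ?thesis
  proof (cases "m = 0")
    case True
    have "0 \<le> real (proc_io 0 ms)" "0 \<le> 2 * real k * real M" by auto
    hence "real (proc_io 0 ms) \<ge> real (n div (k * p)) * (\<Sum>i<k. ls ! i) - 2 * real k * real M"
      unfolding m_def[symmetric] True by (simp, linarith)
    thus ?thesis using p1 by (intro exI[of _ 0]) auto
  next
    case False
    hence m1: "m \<ge> 1" by simp
    define init :: pstate where "init = (\<lambda>_. {}, {}, {})"
    from vs obtain R S where ex: "exec n E p M ms init = Some (R, S, {0..<n})"
      unfolding valid_par_schedule_def init_def by auto
    define st where "st t = the (exec n E p M (take t ms) init)" for t
    have exs: "exec n E p M (take t ms) init = Some (st t)" for t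
    proof -
      have "exec n E p M (take t ms @ drop t ms) init = Some (R, S, {0..<n})" using ex by simp
      from exec_prefix[OF this] show ?thesis unfolding st_def by auto
    qed
    interpret sched n E p M ms "\<lambda>t. fst (st t)" "\<lambda>t. fst (snd (st t))" "\<lambda>t. snd (snd (st t))"
    proof
      have "st 0 = init" using exs[of 0] by simp
      thus "(\<lambda>t. fst (st t)) 0 = (\<lambda>_. {})" "(\<lambda>t. fst (snd (st t))) 0 = {}" "(\<lambda>t. snd (snd (st t))) 0 = {}"
        unfolding init_def by auto
    next
      fix t assume t: "t < length ms"
      have "take (Suc t) ms = take t ms @ [ms ! t]" using t by (simp add: take_Suc_conv_app_nth)
      hence "exec n E p M (take (Suc t) ms) init = step n E p M (ms ! t) (st t)"
        using exs[of t] by (simp add: exec_snoc)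
      hence "step n E p M (ms ! t) (st t) = Some (st (Suc t))" using exs[of "Suc t"] by simp
      thus "step n E p M (ms ! t) (fst (st t), fst (snd (st t)), snd (snd (st t))) =
          Some (fst (st (Suc t)), fst (snd (st (Suc t))), snd (snd (st (Suc t))))" by simp
    qed
    have "st (length ms) = (R, S, {0..<n})" using exs[of "length ms"] ex by simp
    hence fin: "snd (snd (st (length ms))) = {0..<n}" by simp
    have tot: "(\<Sum>j<p. cntc ms j (length ms)) = n" by (rule total_computes[OF fin])
    obtain j where j: "j < p" and jn: "n \<le> p * cntc ms j (length ms)" using pigeon[OF p1 tot] by auto
    have dm: "m * (k * p) \<le> n" unfolding m_def by (rule div_times_less_eq_dividend)
    have "k * m * p = m * (k * p)" by (simp only: ac_simps)
    hence kmp: "k * m * p \<le> n" using dm by linarith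
    have km: "k * m \<le> cntc ms j (length ms)"
    proof -
      have e: "p * (k * m) = k * m * p" by (simp only: ac_simps)
      have "p * (k * m) \<le> p * cntc ms j (length ms)" using kmp jn unfolding e by linarith
      thus ?thesis using p1 by simp
    qed
    have kn: "k \<le> n"
    proof -
      have "k \<le> k * m * p" using m1 p1 by simp
      thus ?thesis using kmp by linarith
    qed
    obtain V where Vc: "\<And>i. i < k \<Longrightarrow> V i \<subseteq> {..<n} \<and> card (V i) = m"
      and Vd: "\<And>i i'. i < k \<Longrightarrow> i' < k \<Longrightarrow> i \<noteq> i' \<Longrightarrow> V i \<inter> V i' = {}"
      and Vio: "(\<Sum>i<k. card {a\<in>V i. \<exists>b. (a,b) \<in> E \<and> b \<notin> V i} + card {b. b \<notin> V i \<and> (\<exists>a\<in>V i. (b,a) \<in> E)})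
        \<le> 2 * k * M + proc_io j ms"
      using segments[OF aE fin km] by blast
    define L where "L = laplacian n E"
    have Lc: "L \<in> carrier_mat n n" unfolding L_def by (rule laplacian_carrier)
    have Ls: "transpose_mat L = L" unfolding L_def by (rule laplacian_sym)
    have srt: "sorted ls" and cp: "char_poly L = (\<Prod>a\<leftarrow>ls. [:- a, 1:])"
      using se unfolding sorted_eigenvalues_def L_def by auto
    have len: "length ls = n" using degree_monic_char_poly[OF Lc] cp degree_lin_prod[of ls] by simp
    obtain u where hL: "\<And>a b. a < n \<Longrightarrow> b < n \<Longrightarrow> L $$ (a,b) = (\<Sum>c<n. u a c * ls ! c * u b c)"
      and hO1: "\<And>c. c < n \<Longrightarrow> (\<Sum>a<n. (u a c)\<^sup>2) = 1"
      and hO2: "\<And>a b. a < n \<Longrightarrow> b < n \<Longrightarrow> (\<Sum>c<n. u a c * u b c) = (if a = b then 1 else 0)"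
      using spectral_entries[OF Lc Ls cp] by blast
    have "real m * (\<Sum>c<k. ls ! c) \<le> (\<Sum>i<k. \<Sum>a\<in>V i. \<Sum>b\<in>V i. L $$ (a,b))"
      by (rule kyfan_sets[of n "\<lambda>a b. L $$ (a,b)" u ls, OF hL hO1 hO2 srt len _ kn])
         (insert k1 Vc Vd, auto)
    also have "\<dots> \<le> (\<Sum>i<k. real (card {a\<in>V i. \<exists>b. (a,b) \<in> E \<and> b \<notin> V i} + card {b. b \<notin> V i \<and> (\<exists>a\<in>V i. (b,a) \<in> E)}))"
      by (rule sum_mono, unfold L_def, rule cut_bound[OF aE], insert Vc, auto)
    also have "\<dots> = real (\<Sum>i<k. card {a\<in>V i. \<exists>b. (a,b) \<in> E \<and> b \<notin> V i} + card {b. b \<notin> V i \<and> (\<exists>a\<in>V i. (b,a) \<in> E)})"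
      by simp
    also have "\<dots> \<le> real (2 * k * M + proc_io j ms)" using Vio by linarith
    finally have "real m * (\<Sum>c<k. ls ! c) \<le> 2 * real k * real M + real (proc_io j ms)" by simp
    thus ?thesis using j unfolding m_def by (intro exI[of _ j]) auto
  qed
qed

end
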